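(* Let $0<\beta<1$. There exist a strictly positive function $\eta:\mathbb{N}_0\to(0,\infty)$ and a nonnegative strictly increasing function $t^*:[0,\infty)\to[0,\infty)$ with $t^*(v)=0$ iff $v=0$, both depending only on $\beta$, such that: if $u$ is a solution of $\partial_tu=\Delta(u^\beta)$ on $[0,\infty)\times\mathbb{Z}$ with initial data $0\le u_0\le1$, then $$u(t,k)\ge\eta(|k-l|)\,(t-s)^{\frac1{1-\beta}}$$ for all $k,l\in\mathbb{Z}$ and all $s\ge0$, $t$ with $0\le t-s\le t^*(u(s,l))$.
   Context: $\Delta v(k)=v(k-1)-2v(k)+v(k+1)$. A solution: $u\in C^0([0,\infty);\ell^\infty_+(\mathbb{Z}))$ with $u(0)=u_0$, each $u(\cdot,k)\in C^1((0,\infty))$ satisfying $\frac{d}{dt}u(t,k)=\Delta(u^\beta)(t,k)$ for all $t>0$. *)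

theory Defs
  imports "HOL-Analysis.Analysis"
begin

definition dlap :: "(int \<Rightarrow> real) \<Rightarrow> int \<Rightarrow> real" where
  "dlap v k = v (k - 1) - 2 * v k + v (k + 1)"

definition is_solution :: "real \<Rightarrow> (int \<Rightarrow> real) \<Rightarrow> (real \<Rightarrow> int \<Rightarrow> real) \<Rightarrow> bool" where
  "is_solution \<beta> u0 u \<longleftrightarrow>
     u 0 = u0 \<and>
     (\<forall>t\<ge>0. (\<forall>k. 0 \<le> u t k) \<and> bounded (range (u t))) \<and>
     (\<forall>t\<ge>0. \<forall>\<epsilon>>0. \<exists>\<delta>>0. \<forall>s\<ge>0. \<bar>s - t\<bar> < \<delta> \<longrightarrow> (\<forall>k. \<bar>u s k - u t k\<bar> \<le> \<epsilon>)) \<and>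
     (\<forall>k. (\<forall>t>0. ((\<lambda>\<tau>. u \<tau> k) has_real_derivative dlap (\<lambda>j. u t j powr \<beta>) k) (at t)) \<and>
          continuous_on {0<..} (\<lambda>t. dlap (\<lambda>j. u t j powr \<beta>) k))"

end

theory Submission
  imports Defs
begin

lemma cmp_lemma:
  fixes h h' :: "real \<Rightarrow> real"
  assumes ab: "a \<le> b" and hc: "continuous_on {a..b} h" and ha: "0 \<le> h a"
    and hd: "\<And>x. a < x \<Longrightarrow> x \<le> b \<Longrightarrow> (h has_real_derivative h' x) (at x)"
    and hp: "\<And>x. a < x \<Longrightarrow> x \<le> b \<Longrightarrow> h x \<le> 0 \<Longrightarrow> 0 < h' x"
  shows "0 \<le> h b"
proof (rule ccontr)
  assume nb: "\<not> 0 \<le> h b"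
  define S where "S = {a..b} \<inter> h -` {0..}"
  have cl: "closed S" unfolding S_def by (rule continuous_closed_preimage[OF hc]) auto
  have aS: "a \<in> S" using ab ha by (simp add: S_def)
  have bdd: "bdd_above S" unfolding S_def by (rule bdd_aboveI[of _ b]) auto
  define x0 where "x0 = Sup S"
  have x0S: "x0 \<in> S" unfolding x0_def using closed_contains_Sup[OF _ bdd cl] aS by blast
  have hx0: "0 \<le> h x0" and x0ab: "a \<le> x0" "x0 \<le> b" using x0S by (auto simp: S_def)
  have x0b: "x0 < b" using x0ab hx0 nb by (cases "x0 = b") auto
  have neg: "h y < 0" if "x0 < y" "y \<le> b" for y
  proof (rule ccontr)
    assume "\<not> h y < 0"
    then have "y \<in> S" using that x0ab by (auto simp: S_def)
    then have "y \<le> x0" unfolding x0_def by (rule cSup_upper[OF _ bdd])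
    then show False using that by simp
  qed
  have "continuous_on {x0..b} h" using continuous_on_subset[OF hc] x0ab by auto
  moreover have "\<forall>x. x0 < x \<and> x < b \<longrightarrow> h differentiable (at x)"
  proof (intro allI impI)
    fix x assume "x0 < x \<and> x < b"
    then have "(h has_real_derivative h' x) (at x)" using hd x0ab by simp
    then show "h differentiable (at x)" using real_differentiable_def by blast
  qed
  ultimately obtain l z where z: "x0 < z" "z < b" "DERIV h z :> l" "h b - h x0 = (b - x0) * l"
    using MVT[OF x0b] by blast
  have "l = h' z" using DERIV_unique[OF z(3) hd[of z]] z x0ab by simp
  moreover have "0 < h' z" using hp[of z] neg[of z] z x0ab by simp
  ultimately have "0 < (b - x0) * l" using x0b by simp
  then show False using z(4) hx0 nb by simp
qed

lemma sol_nonneg: "is_solution \<beta> u0 u \<Longrightarrow> 0 \<le> t \<Longrightarrow> 0 \<le> u t k"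
  unfolding is_solution_def by blast

lemma sol_deriv: "is_solution \<beta> u0 u \<Longrightarrow> 0 < t \<Longrightarrow>
   ((\<lambda>\<tau>. u \<tau> k) has_real_derivative dlap (\<lambda>j. u t j powr \<beta>) k) (at t)"
  unfolding is_solution_def by blast

lemma sol_cont: assumes "is_solution \<beta> u0 u" shows "continuous_on {0..} (\<lambda>\<tau>. u \<tau> k)"
  unfolding continuous_on_iff dist_real_def
proof (intro ballI allI impI)
  fix x e :: real assume x: "x \<in> {0..}" and e: "0 < e"
  have "\<forall>t\<ge>0. \<forall>\<epsilon>>0. \<exists>\<delta>>0. \<forall>s\<ge>0. \<bar>s - t\<bar> < \<delta> \<longrightarrow> (\<forall>k. \<bar>u s k - u t k\<bar> \<le> \<epsilon>)"
    using assms unfolding is_solution_def by blast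
  then obtain d where d: "d > 0" "\<forall>s\<ge>0. \<bar>s - x\<bar> < d \<longrightarrow> (\<forall>k. \<bar>u s k - u x k\<bar> \<le> e/2)"
    using x e by (meson atLeast_iff half_gt_zero)
  show "\<exists>d>0. \<forall>x'\<in>{0..}. \<bar>x' - x\<bar> < d \<longrightarrow> \<bar>u x' k - u x k\<bar> < e"
  proof (intro exI[of _ d] conjI ballI impI)
    fix x' assume "x' \<in> {0..}" "\<bar>x' - x\<bar> < d"
    then have "\<bar>u x' k - u x k\<bar> \<le> e/2" using d by auto
    then show "\<bar>u x' k - u x k\<bar> < e" using e by linarith
  qed (rule d(1))
qed

lemma dlap_lb:
  assumes "is_solution \<beta> u0 u" "0 \<le> t" "j = k - 1 \<or> j = k + 1"
  shows "u t j powr \<beta> - 2 * u t k powr \<beta> \<le> dlap (\<lambda>j. u t j powr \<beta>) k"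
proof -
  have "0 \<le> u t (k-1) powr \<beta>" "0 \<le> u t (k+1) powr \<beta>" by auto
  then show ?thesis using assms(3) unfolding dlap_def by auto
qed

lemma base_lemma:
  assumes sol: "is_solution \<beta> u0 u" and b0: "0 < \<beta>" and b1: "\<beta> < 1"
    and s0: "0 \<le> s" and st: "s \<le> t" and tb: "t - s \<le> u s l powr (1 - \<beta>) / 6"
  shows "1/2 * (t - s) powr (1 / (1 - \<beta>)) \<le> u t l"
proof -
  define v where "v = u s l"
  have v0: "0 \<le> v" using sol_nonneg[OF sol s0] v_def by simp
  have ut0: "0 \<le> u t l" using sol_nonneg[OF sol] s0 st by simp
  show ?thesis
  proof (cases "v = 0")
    case True
    then have "t = s" using tb st v_def by simp
    then show ?thesis using ut0 by simp
  next
    case False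
    then have vp: "0 < v" using v0 by simp
    define h where "h = (\<lambda>\<tau>. u \<tau> l - (v - 3 * v powr \<beta> * (\<tau> - s)))"
    define h' where "h' = (\<lambda>\<tau>. dlap (\<lambda>j. u \<tau> j powr \<beta>) l + 3 * v powr \<beta>)"
    have "0 \<le> h t"
    proof (rule cmp_lemma[OF st, of h h'])
      have "continuous_on {s..t} (\<lambda>\<tau>. u \<tau> l)"
        using continuous_on_subset[OF sol_cont[OF sol]] s0 by auto
      then show "continuous_on {s..t} h" unfolding h_def by (intro continuous_intros)
      show "0 \<le> h s" unfolding h_def v_def by simp
    next
      fix x assume x: "s < x" "x \<le> t"
      then have "0 < x" using s0 by simp
      from sol_deriv[OF sol this, of l] show "(h has_real_derivative h' x) (at x)"
        unfolding h_def h'_def by (auto intro!: derivative_eq_intros)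
    next
      fix x assume x: "s < x" "x \<le> t" "h x \<le> 0"
      have u0: "0 \<le> u x l" using sol_nonneg[OF sol] x s0 by simp
      have "u x l \<le> v - 3 * v powr \<beta> * (x - s)" using x(3) h_def by simp
      moreover have "0 \<le> 3 * v powr \<beta> * (x - s)" using x by simp
      ultimately have "u x l \<le> v" by linarith
      then have "u x l powr \<beta> \<le> v powr \<beta>" using u0 b0 by (simp add: powr_mono2)
      moreover have "u x (l-1) powr \<beta> - 2 * u x l powr \<beta> \<le> dlap (\<lambda>j. u x j powr \<beta>) l"
        using dlap_lb[OF sol, of x "l-1" l] x s0 by simp
      moreover have "0 \<le> u x (l-1) powr \<beta>" by simp
      moreover have "0 < v powr \<beta>" using vp by simp
      ultimately show "0 < h' x" unfolding h'_def by linarith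
    qed
    then have A: "v - 3 * v powr \<beta> * (t - s) \<le> u t l" unfolding h_def by simp
    have "v powr \<beta> * v powr (1 - \<beta>) = v" using vp by (simp add: powr_add[symmetric])
    moreover have "3 * v powr \<beta> * (t - s) \<le> 3 * v powr \<beta> * (v powr (1 - \<beta>) / 6)"
      using tb v_def by (intro mult_left_mono) auto
    ultimately have B: "v / 2 \<le> u t l" using A by (simp add: field_simps)
    have "t - s \<le> v powr (1 - \<beta>)" using tb[folded v_def] powr_ge_zero[of v "1 - \<beta>"] by linarith
    then have "(t - s) powr (1 / (1 - \<beta>)) \<le> (v powr (1 - \<beta>)) powr (1 / (1 - \<beta>))"
      using st b1 by (intro powr_mono2) auto
    also have "\<dots> = v" using b1 vp by (simp add: powr_powr)
    finally show ?thesis using B by simp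
  qed
qed

lemma step_lemma:
  assumes sol: "is_solution \<beta> u0 u" and b0: "0 < \<beta>" and b1: "\<beta> < 1"
    and s0: "0 \<le> s" and st: "s \<le> t" and e0: "0 < e"
    and jk: "j = k - 1 \<or> j = k + 1"
    and hyp: "\<And>\<tau>. s \<le> \<tau> \<Longrightarrow> \<tau> \<le> t \<Longrightarrow> e * (\<tau> - s) powr (1 / (1 - \<beta>)) \<le> u \<tau> j"
  shows "(min 1 (e powr \<beta> / (4 + 2 * (1 / (1 - \<beta>))))) powr (1 / \<beta>) * (t - s) powr (1 / (1 - \<beta>)) \<le> u t k"
proof -
  define p where "p = 1 / (1 - \<beta>)"
  define A where "A = e powr \<beta>"
  define C where "C = min 1 (A / (4 + 2 * p))"
  define c where "c = C powr (1 / \<beta>)"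
  have p1: "1 < p" using b0 b1 by (simp add: p_def)
  have pb: "p * \<beta> = p - 1" using b1 by (simp add: p_def field_simps)
  have A0: "0 < A" using e0 by (simp add: A_def)
  have C0: "0 < C" and C1: "C \<le> 1" and CA: "C \<le> A / (4 + 2 * p)" using A0 p1 by (auto simp: C_def)
  have c0: "0 < c" using C0 by (simp add: c_def)
  have cC: "c powr \<beta> = C" using C0 b0 by (simp add: c_def powr_powr)
  have "c \<le> C"
  proof -
    have "C powr (1 / \<beta>) \<le> C powr 1" using C0 C1 b0 b1
      by (intro powr_mono') auto
    then show ?thesis using C0 by (simp add: c_def)
  qed
  then have key: "c * p < A - 2 * C"
  proof -
    have "c * p \<le> C * p" using \<open>c \<le> C\<close> p1 by simp
    moreover have "(4 + 2 * p) * C \<le> A" using CA p1 by (simp add: field_simps)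
    moreover have "0 < C * p" using C0 p1 by simp
    moreover have "(4 + 2 * p) * C = 4 * C + 2 * (C * p)" by (simp add: algebra_simps)
    ultimately show ?thesis using A0 C0 p1 by linarith
  qed
  define h where "h = (\<lambda>\<tau>. u \<tau> k - c * (\<tau> - s) powr p)"
  define h' where "h' = (\<lambda>\<tau>. dlap (\<lambda>j. u \<tau> j powr \<beta>) k - c * (p * (\<tau> - s) powr (p - 1)))"
  have "0 \<le> h t"
  proof (rule cmp_lemma[OF st, of h h'])
    have "continuous_on {s..t} (\<lambda>\<tau>. u \<tau> k)"
      using continuous_on_subset[OF sol_cont[OF sol]] s0 by auto
    moreover have "continuous_on {s..t} (\<lambda>\<tau>. (\<tau> - s) powr p)"
      using p1 by (intro continuous_on_powr' continuous_intros) auto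
    ultimately show "continuous_on {s..t} h" unfolding h_def
      by (intro continuous_on_diff continuous_on_mult continuous_on_const)
    show "0 \<le> h s" unfolding h_def using p1 sol_nonneg[OF sol s0] by simp
  next
    fix x assume x: "s < x" "x \<le> t"
    then have "0 < x" using s0 by simp
    from sol_deriv[OF sol this, of k] show "(h has_real_derivative h' x) (at x)"
      unfolding h_def h'_def using x by (auto intro!: derivative_eq_intros)
  next
    fix x assume x: "s < x" "x \<le> t" "h x \<le> 0"
    define X where "X = (x - s) powr (p - 1)"
    have X0: "0 < X" using x by (simp add: X_def)
    have uk0: "0 \<le> u x k" using sol_nonneg[OF sol] x s0 by simp
    have uk: "u x k \<le> c * (x - s) powr p" using x(3) h_def by simp
    have uj: "e * (x - s) powr p \<le> u x j" using hyp[of x] x p_def by simp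
    have "u x k powr \<beta> \<le> (c * (x - s) powr p) powr \<beta>" using uk uk0 b0 by (simp add: powr_mono2)
    also have "\<dots> = C * X" using c0 x cC
      by (simp add: powr_mult powr_powr pb X_def)
    finally have K: "u x k powr \<beta> \<le> C * X" .
    have "A * X = (e * (x - s) powr p) powr \<beta>" using e0 x
      by (simp add: powr_mult powr_powr pb X_def A_def)
    also have "\<dots> \<le> u x j powr \<beta>" using uj e0 x b0 by (intro powr_mono2) auto
    finally have J: "A * X \<le> u x j powr \<beta>" .
    have D: "u x j powr \<beta> - 2 * u x k powr \<beta> \<le> dlap (\<lambda>j. u x j powr \<beta>) k"
      using dlap_lb[OF sol _ jk] x s0 by simp
    have "c * (p * X) < (A - 2 * C) * X" using key X0
      by (metis mult.assoc mult_strict_right_mono)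
    then show "0 < h' x" unfolding h'_def X_def[symmetric] using K J D
      by (simp add: algebra_simps)
  qed
  then show ?thesis unfolding h_def c_def C_def A_def p_def by simp
qed

fun etaf :: "real \<Rightarrow> nat \<Rightarrow> real" where
  "etaf b 0 = 1/2"
| "etaf b (Suc n) = (min 1 (etaf b n powr b / (4 + 2 * (1 / (1 - b))))) powr (1 / b)"

lemma etaf_pos: "0 < b \<Longrightarrow> b < 1 \<Longrightarrow> 0 < etaf b n"
proof (induction n)
  case (Suc n)
  assume b: "0 < b" "b < 1"
  have "0 < etaf b n powr b" using Suc b by simp
  moreover have "0 < 1 / (1 - b)" using b by simp
  then have "0 < 4 + 2 * (1 / (1 - b))" by linarith
  ultimately have "0 < min 1 (etaf b n powr b / (4 + 2 * (1 / (1 - b))))" by simp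
  then show ?case by simp
qed simp

lemma main_bound:
  assumes sol: "is_solution \<beta> u0 u" and b0: "0 < \<beta>" and b1: "\<beta> < 1" and s0: "0 \<le> s"
  shows "\<forall>k t. nat \<bar>k - l\<bar> = n \<longrightarrow> s \<le> t \<longrightarrow> t - s \<le> u s l powr (1 - \<beta>) / 6 \<longrightarrow>
     etaf \<beta> n * (t - s) powr (1 / (1 - \<beta>)) \<le> u t k"
proof (induction n)
  case 0
  then show ?case using base_lemma[OF sol b0 b1 s0] by auto
next
  case (Suc n)
  show ?case
  proof (intro allI impI)
    fix k t assume kn: "nat \<bar>k - l\<bar> = Suc n" and st: "s \<le> t" and tb: "t - s \<le> u s l powr (1 - \<beta>) / 6"
    define j where "j = (if l < k then k - 1 else k + 1)"
    have jk: "j = k - 1 \<or> j = k + 1" by (simp add: j_def)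
    have jn: "nat \<bar>j - l\<bar> = n" using kn by (auto simp: j_def)
    show "etaf \<beta> (Suc n) * (t - s) powr (1 / (1 - \<beta>)) \<le> u t k"
      using step_lemma[OF sol b0 b1 s0 st etaf_pos[OF b0 b1] jk] Suc.IH jn tb by force
  qed
qed

theorem lemmaA13:
  fixes \<beta> :: real
  assumes "0 < \<beta>" and "\<beta> < 1"
  shows "\<exists>(\<eta>::nat \<Rightarrow> real) (tstar::real \<Rightarrow> real).
     (\<forall>n. 0 < \<eta> n) \<and>
     (\<forall>v\<ge>0. 0 \<le> tstar v) \<and> strict_mono_on {0..} tstar \<and>
     (\<forall>v\<ge>0. tstar v = 0 \<longleftrightarrow> v = 0) \<and>
     (\<forall>u0 u. (\<forall>k. 0 \<le> u0 k \<and> u0 k \<le> 1) \<and> is_solution \<beta> u0 u \<longrightarrow>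
        (\<forall>k l s t. 0 \<le> s \<and> 0 \<le> t - s \<and> t - s \<le> tstar (u s l) \<longrightarrow>
           \<eta> (nat \<bar>k - l\<bar>) * (t - s) powr (1 / (1 - \<beta>)) \<le> u t k))"
proof (intro exI[of _ "etaf \<beta>"] exI[of _ "\<lambda>v. v powr (1 - \<beta>) / 6"] conjI allI impI)
  show "0 < etaf \<beta> n" for n using etaf_pos assms by blast
  show "0 \<le> v powr (1 - \<beta>) / 6" for v by simp
  show "strict_mono_on {0..} (\<lambda>v. v powr (1 - \<beta>) / 6)"
    using assms by (intro strict_mono_onI) (auto intro: powr_less_mono2)
  show "(v powr (1 - \<beta>) / 6 = 0) = (v = 0)" for v by simp
next
  fix u0 u k l s t
  assume a: "(\<forall>k. 0 \<le> u0 k \<and> u0 k \<le> 1) \<and> is_solution \<beta> u0 u"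
    and b: "0 \<le> s \<and> 0 \<le> t - s \<and> t - s \<le> u s l powr (1 - \<beta>) / 6"
  then show "etaf \<beta> (nat \<bar>k - l\<bar>) * (t - s) powr (1 / (1 - \<beta>)) \<le> u t k"
    using main_bound[of \<beta> u0 u s l "nat \<bar>k - l\<bar>"] assms by auto
qed

end
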